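(* Let $G$ be a connected simple graph with $n\ge 2$ vertices and $m$ edges. Then \[ \mathscr{K}_e(G)=\mathscr{K}_v(G)+2m-n . \]
   Context: Kemeny's constant of an irreducible finite Markov chain with transition matrix $P$ whose eigenvalues (with multiplicity) are $1=\rho_1,\rho_2,\dots,\rho_N$ (with $1$ a simple eigenvalue) is $\mathscr{K}(P)=\sum_{i=2}^{N}\frac{1}{1-\rho_i}$; equivalently $\mathscr{K}(P)=\sum_{j\ne i}\pi_j m_{ij}$ (independent of $i$), where $\pi$ is the stationary distribution and $m_{ij}$ the mean first passage time from state $i$ to state $j$. The vertex Kemeny's constant $\mathscr{K}_v(G)$ is Kemeny's constant of the simple random walk on the vertices of $G$, with transition matrix $P=D^{-1}A$ ($A$ the adjacency matrix, $D$ the diagonal degree matrix). The edge Kemeny's constant $\mathscr{K}_e(G)$ is Kemeny's constant of the simple random walk on the arcs of $G$: the states are the $2m$ arcs $(u,v)$ with $\{u,v\}\in E(G)$, and from arc $(u,v)$ the walk moves to arc $(v,w)$ with probability $1/\deg(v)$ for each neighbor $w$ of $v$ (including $w=u$), all other transition probabilities being $0$. *)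

theory Defs
  imports "Jordan_Normal_Form.Char_Poly" "HOL-Computational_Algebra.Polynomial"
begin

definition kemeny_mat :: "complex mat \<Rightarrow> complex" where
  "kemeny_mat A = (\<Sum>\<rho> \<in># proots (char_poly A) - {#1#}. 1 / (1 - \<rho>))"

(* Kemeny's constant of a Markov chain on a finite state set S with transition
   probabilities p, via the transition matrix with respect to some enumeration of S
   (the spectrum does not depend on the enumeration). *)
definition kemeny :: "'s set \<Rightarrow> ('s \<Rightarrow> 's \<Rightarrow> real) \<Rightarrow> complex" where
  "kemeny S p = (let xs = (SOME xs. distinct xs \<and> set xs = S) in
     kemeny_mat (mat (length xs) (length xs)
       (\<lambda>(i, j). complex_of_real (p (xs ! i) (xs ! j)))))"

definition simple_graph :: "'a set \<Rightarrow> ('a \<Rightarrow> 'a \<Rightarrow> bool) \<Rightarrow> bool" where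
  "simple_graph V E \<longleftrightarrow> finite V \<and> (\<forall>u v. E u v \<longrightarrow> u \<in> V \<and> v \<in> V)
     \<and> (\<forall>u v. E u v \<longrightarrow> E v u) \<and> (\<forall>u. \<not> E u u)"

definition connected_graph :: "'a set \<Rightarrow> ('a \<Rightarrow> 'a \<Rightarrow> bool) \<Rightarrow> bool" where
  "connected_graph V E \<longleftrightarrow> (\<forall>u\<in>V. \<forall>v\<in>V. E\<^sup>*\<^sup>* u v)"

definition degree :: "'a set \<Rightarrow> ('a \<Rightarrow> 'a \<Rightarrow> bool) \<Rightarrow> 'a \<Rightarrow> nat" where
  "degree V E v = card {w \<in> V. E v w}"

definition edges :: "'a set \<Rightarrow> ('a \<Rightarrow> 'a \<Rightarrow> bool) \<Rightarrow> 'a set set" where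
  "edges V E = {{u, v} | u v. u \<in> V \<and> v \<in> V \<and> E u v}"

definition arcs :: "'a set \<Rightarrow> ('a \<Rightarrow> 'a \<Rightarrow> bool) \<Rightarrow> ('a \<times> 'a) set" where
  "arcs V E = {(u, v). u \<in> V \<and> v \<in> V \<and> E u v}"

definition vertex_walk :: "'a set \<Rightarrow> ('a \<Rightarrow> 'a \<Rightarrow> bool) \<Rightarrow> 'a \<Rightarrow> 'a \<Rightarrow> real" where
  "vertex_walk V E u w = (if E u w then 1 / real (degree V E u) else 0)"

definition arc_walk :: "'a set \<Rightarrow> ('a \<Rightarrow> 'a \<Rightarrow> bool) \<Rightarrow> 'a \<times> 'a \<Rightarrow> 'a \<times> 'a \<Rightarrow> real" where
  "arc_walk V E a b = (if fst b = snd a \<and> E (fst b) (snd b)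
                        then 1 / real (degree V E (snd a)) else 0)"

definition vertex_kemeny :: "'a set \<Rightarrow> ('a \<Rightarrow> 'a \<Rightarrow> bool) \<Rightarrow> complex" where
  "vertex_kemeny V E = kemeny V (vertex_walk V E)"

definition edge_kemeny :: "'a set \<Rightarrow> ('a \<Rightarrow> 'a \<Rightarrow> bool) \<Rightarrow> complex" where
  "edge_kemeny V E = kemeny (arcs V E) (arc_walk V E)"

end

theory Submission
  imports Defs
begin


lemma sylv_det:
  fixes A B :: "'a :: idom mat" and x :: 'a
  assumes A: "A \<in> carrier_mat n k" and B: "B \<in> carrier_mat k n"
  shows "x ^ k * det (x \<cdot>\<^sub>m 1\<^sub>m n - A * B) = x ^ n * det (x \<cdot>\<^sub>m 1\<^sub>m k - B * A)"
proof -
  define M where "M = four_block_mat (1\<^sub>m n) A B (x \<cdot>\<^sub>m 1\<^sub>m k)"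
  define L where "L = four_block_mat (x \<cdot>\<^sub>m 1\<^sub>m n) (- A) (0\<^sub>m k n) (1\<^sub>m k)"
  have M: "M \<in> carrier_mat (n+k) (n+k)" unfolding M_def using A B by auto
  have L: "L \<in> carrier_mat (n+k) (n+k)" unfolding L_def using A B by auto
  have AB: "A * B \<in> carrier_mat n n" using A B by auto
  have BA: "B * A \<in> carrier_mat k k" using A B by auto
  have dL: "det L = x ^ n"
    unfolding L_def
    by (subst det_four_block_mat_lower_left_zero[of _ n _ k], insert A, auto simp: det_smult)
  have e1: "x \<cdot>\<^sub>m 1\<^sub>m n * 1\<^sub>m n + - A * B = x \<cdot>\<^sub>m 1\<^sub>m n - A * B"
    using add_uminus_minus_mat[of "x \<cdot>\<^sub>m 1\<^sub>m n" n n "A*B"] AB A B by simp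
  have e2: "x \<cdot>\<^sub>m 1\<^sub>m n * A + - A * (x \<cdot>\<^sub>m 1\<^sub>m k) = 0\<^sub>m n k"
  proof -
    have "x \<cdot>\<^sub>m 1\<^sub>m n * A = x \<cdot>\<^sub>m A" using A mult_smult_assoc_mat[OF one_carrier_mat[of n] A, of x] by simp
    moreover have "- A * (x \<cdot>\<^sub>m 1\<^sub>m k) = - (x \<cdot>\<^sub>m A)" using A mult_smult_distrib[OF A one_carrier_mat[of k], of x] by simp
    ultimately show ?thesis using A add_uminus_minus_mat[of "x \<cdot>\<^sub>m A" n k "x \<cdot>\<^sub>m A"] B by simp
  qed
  have e3: "0\<^sub>m k n * 1\<^sub>m n + 1\<^sub>m k * B = B" using B by simp
  have e4: "0\<^sub>m k n * A + 1\<^sub>m k * (x \<cdot>\<^sub>m 1\<^sub>m k) = x \<cdot>\<^sub>m 1\<^sub>m k" using A by simp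
  have "L * M = four_block_mat (x \<cdot>\<^sub>m 1\<^sub>m n - A * B) (0\<^sub>m n k) B (x \<cdot>\<^sub>m 1\<^sub>m k)"
    unfolding L_def M_def
    by (subst mult_four_block_mat[of _ n n _ k _ k _ _ n _ k], insert A B, auto simp only: e1 e2 e3 e4 
      smult_carrier_mat one_carrier_mat uminus_carrier_iff_mat zero_carrier_mat)
  note LM = this
  have 1: "det L * det M = det (x \<cdot>\<^sub>m 1\<^sub>m n - A * B) * x ^ k"
  proof -
    have "det L * det M = det (L*M)" using det_mult[OF L M] by simp
    also have "\<dots> = det (x \<cdot>\<^sub>m 1\<^sub>m n - A * B) * det (x \<cdot>\<^sub>m 1\<^sub>m k)" unfolding LM
      by (rule det_four_block_mat_upper_right_zero[OF minus_carrier_mat[OF AB] refl B]) simp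
    also have "det (x \<cdot>\<^sub>m 1\<^sub>m k) = x^k" by (simp add: det_smult)
    finally show ?thesis .
  qed
  have f1: "1\<^sub>m n * (x \<cdot>\<^sub>m 1\<^sub>m n) + A * 0\<^sub>m k n = x \<cdot>\<^sub>m 1\<^sub>m n" using A by simp
  have f2: "1\<^sub>m n * - A + A * 1\<^sub>m k = 0\<^sub>m n k" using A
    by (metis left_mult_one_mat uminus_l_inv_mat uminus_carrier_iff_mat right_mult_one_mat)
  have f3: "B * (x \<cdot>\<^sub>m 1\<^sub>m n) + x \<cdot>\<^sub>m 1\<^sub>m k * 0\<^sub>m k n = x \<cdot>\<^sub>m B" using B
    using mult_smult_distrib[OF B one_carrier_mat[of n], of x] by simp
  have f4: "B * - A + x \<cdot>\<^sub>m 1\<^sub>m k * 1\<^sub>m k = x \<cdot>\<^sub>m 1\<^sub>m k - B * A"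
  proof -
    have "B * - A = - (B * A)" using A B by simp
    thus ?thesis using BA add_uminus_minus_mat[of "x \<cdot>\<^sub>m 1\<^sub>m k" k k "B*A"] comm_add_mat[of "- (B * A)" k k "x \<cdot>\<^sub>m 1\<^sub>m k"] A B by simp
  qed
  have "M * L = four_block_mat (x \<cdot>\<^sub>m 1\<^sub>m n) (0\<^sub>m n k) (x \<cdot>\<^sub>m B) (x \<cdot>\<^sub>m 1\<^sub>m k - B * A)"
    unfolding L_def M_def
    by (subst mult_four_block_mat[of _ n n _ k _ k _ _ n _ k], insert A B, auto simp only: f1 f2 f3 f4 
      smult_carrier_mat one_carrier_mat uminus_carrier_iff_mat zero_carrier_mat)
  note MLeq = this
  have 2: "det M * det L = x ^ n * det (x \<cdot>\<^sub>m 1\<^sub>m k - B * A)"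
  proof -
    have "det M * det L = det (M*L)" using det_mult[OF M L] by simp
    also have "\<dots> = det (x \<cdot>\<^sub>m 1\<^sub>m n) * det (x \<cdot>\<^sub>m 1\<^sub>m k - B * A)" unfolding MLeq
      by (rule det_four_block_mat_upper_right_zero[OF _ refl _ minus_carrier_mat[OF BA]]) (use B in simp_all)
    also have "det (x \<cdot>\<^sub>m 1\<^sub>m n) = x^n" by (simp add: det_smult)
    finally show ?thesis .
  qed
  show ?thesis using 1 2 dL by (simp add: mult.commute)
qed

lemma neg_char_matrix: "C \<in> carrier_mat m m \<Longrightarrow> - char_matrix C x = x \<cdot>\<^sub>m 1\<^sub>m m - C"
  by (rule eq_matI) (auto simp: char_matrix_def)

lemma cp_sylv:
  fixes A B :: "complex mat"
  assumes A: "A \<in> carrier_mat n k" and B: "B \<in> carrier_mat k n"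
  shows "[:0,1:] ^ k * char_poly (A * B) = [:0,1:] ^ n * char_poly (B * A)"
proof -
  have AB: "A * B \<in> carrier_mat n n" using A B by auto
  have BA: "B * A \<in> carrier_mat k k" using A B by auto
  have "poly ([:0,1:] ^ k * char_poly (A * B)) = poly ([:0,1:] ^ n * char_poly (B * A))"
  proof
    fix x
    show "poly ([:0,1:] ^ k * char_poly (A * B)) x = poly ([:0,1:] ^ n * char_poly (B * A)) x"
      unfolding poly_mult poly_power char_poly_matrix[OF AB] char_poly_matrix[OF BA]
        neg_char_matrix[OF AB] neg_char_matrix[OF BA]
      using sylv_det[OF A B, of x] by simp
  qed
  thus ?thesis using poly_eq_poly_eq_iff by blast
qed

lemma sum_nth_distinct:
  assumes "distinct xs"
  shows "(\<Sum>i\<in>{0..<length xs}. f (xs ! i)) = (\<Sum>x\<in>set xs. f x)"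
  using sum.reindex_bij_betw[OF bij_betw_nth[OF assms _ refl], of "{0..<length xs}" f]
  by (simp add: atLeast0LessThan)

lemma char_poly_nonzero:
  fixes A :: "complex mat"
  assumes "A \<in> carrier_mat n n"
  shows "char_poly A \<noteq> 0"
  using degree_monic_char_poly[OF assms] by auto

lemma diff_single_notin:
  "a \<notin># A \<Longrightarrow> A + B - {#a#} = A + (B - {#a#})"
  by (rule multiset_eqI) (auto simp: not_in_iff)

lemma kemeny_shift:
  fixes P Q :: "complex mat"
  assumes P: "P \<in> carrier_mat N N" and Q: "Q \<in> carrier_mat n n"
    and eq: "[:0,1:] ^ n * char_poly P = [:0,1:] ^ N * char_poly Q"
  shows "kemeny_mat P = kemeny_mat Q + of_nat N - of_nat n"
proof -
  let ?f = "\<lambda>\<rho>::complex. 1 / (1 - \<rho>)"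
  have nz: "[:0,1:] ^ m \<noteq> (0 :: complex poly)" for m by simp
  have "proots ([:0,1:] ^ n * char_poly P) = proots ([:0,1:] ^ N * char_poly Q)" using eq by simp
  hence "replicate_mset n 0 + proots (char_poly P) = replicate_mset N 0 + proots (char_poly Q)"
    using char_poly_nonzero[OF P] char_poly_nonzero[OF Q]
    by (simp add: proots_mult proots_power nz)
  hence "replicate_mset n 0 + proots (char_poly P) - {#1#} = replicate_mset N 0 + proots (char_poly Q) - {#1#}"
    by simp
  hence "replicate_mset n 0 + (proots (char_poly P) - {#1#}) = replicate_mset N 0 + (proots (char_poly Q) - {#1#})"
    by (simp add: diff_single_notin)
  hence "(\<Sum>\<rho> \<in># replicate_mset n 0 + (proots (char_poly P) - {#1#}). ?f \<rho>)
       = (\<Sum>\<rho> \<in># replicate_mset N 0 + (proots (char_poly Q) - {#1#}). ?f \<rho>)" by simp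
  hence "of_nat n + kemeny_mat P = of_nat N + kemeny_mat Q"
    unfolding kemeny_mat_def by simp
  thus ?thesis by (simp add: algebra_simps)
qed


lemma card_arcs:
  assumes G: "simple_graph V E"
  shows "card (arcs V E) = 2 * card (edges V E)"
proof -
  let ?h = "\<lambda>(u, v). {u, v}"
  have fin: "finite (arcs V E)"
  proof -
    have "arcs V E \<subseteq> V \<times> V" unfolding arcs_def by auto
    thus ?thesis using G unfolding simple_graph_def by (meson finite_SigmaI finite_subset)
  qed
  have img: "?h ` arcs V E = edges V E" unfolding arcs_def edges_def by auto
  have fib: "card {x \<in> arcs V E. ?h x = e} = 2" if he: "e \<in> edges V E" for e
  proof -
    obtain a b where e: "e = {a, b}" and ab: "a \<in> V" "b \<in> V" "E a b"
      using he unfolding edges_def by blast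
    have neq: "a \<noteq> b" using G ab unfolding simple_graph_def by auto
    have ba: "E b a" using G ab unfolding simple_graph_def by auto
    have "{x \<in> arcs V E. ?h x = e} = {(a, b), (b, a)}"
    proof (rule Set.set_eqI)
      fix x :: "'a \<times> 'a"
      obtain u v where x: "x = (u, v)" by (cases x)
      have "x \<in> arcs V E \<and> ?h x = e \<longleftrightarrow> (u = a \<and> v = b) \<or> (u = b \<and> v = a)"
        unfolding x e arcs_def using ab ba by (simp add: doubleton_eq_iff) blast
      thus "x \<in> {x \<in> arcs V E. ?h x = e} \<longleftrightarrow> x \<in> {(a, b), (b, a)}" using x by auto
    qed
    thus ?thesis using neq by simp
  qed
  have "card (arcs V E) = (\<Sum>x\<in>arcs V E. 1)" by simp
  also have "\<dots> = (\<Sum>e\<in>?h ` arcs V E. \<Sum>x\<in>{x \<in> arcs V E. ?h x = e}. 1)"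
    by (rule sum.image_gen[OF fin])
  also have "\<dots> = (\<Sum>e\<in>edges V E. 2)" unfolding img
    by (rule sum.cong[OF refl]) (simp add: fib)
  finally show ?thesis by simp
qed

theorem theorem2p9:
  fixes V :: "'a set" and E :: "'a \<Rightarrow> 'a \<Rightarrow> bool"
  assumes "simple_graph V E" and "connected_graph V E" and "card V \<ge> 2"
  shows "edge_kemeny V E
           = vertex_kemeny V E + of_nat (2 * card (edges V E)) - of_nat (card V)"
proof -
  note G = assms(1)
  have finV: "finite V" using G unfolding simple_graph_def by auto
  have finA: "finite (arcs V E)"
  proof -
    have "arcs V E \<subseteq> V \<times> V" unfolding arcs_def by auto
    thus ?thesis using finV by (meson finite_SigmaI finite_subset)
  qed
  define xs where "xs = (SOME xs. distinct xs \<and> set xs = V)"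
  define ys where "ys = (SOME ys. distinct ys \<and> set ys = arcs V E)"
  have xs: "distinct xs" "set xs = V"
  proof -
    have "\<exists>xs. distinct xs \<and> set xs = V" using finite_distinct_list[OF finV] by blast
    from someI_ex[OF this] show "distinct xs" "set xs = V" unfolding xs_def by auto
  qed
  have ys: "distinct ys" "set ys = arcs V E"
  proof -
    have "\<exists>xs. distinct xs \<and> set xs = arcs V E" using finite_distinct_list[OF finA] by blast
    from someI_ex[OF this] show "distinct ys" "set ys = arcs V E" unfolding ys_def by auto
  qed
  define n where "n = length xs"
  define N where "N = length ys"
  have n: "n = card V" unfolding n_def using xs distinct_card by metis
  have N: "N = 2 * card (edges V E)" unfolding N_def using ys distinct_card card_arcs[OF G] by metis
  define c where "c = (\<lambda>v. 1 / of_nat (degree V E v) :: complex)"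
  define Hm :: "complex mat" where "Hm = mat N n (\<lambda>(j, i). if snd (ys ! j) = xs ! i then 1 else 0)"
  define Km :: "complex mat" where "Km = mat n N (\<lambda>(i, j). if fst (ys ! j) = xs ! i then c (xs ! i) else 0)"
  define Pv :: "complex mat" where "Pv = mat n n (\<lambda>(i, j). complex_of_real (vertex_walk V E (xs ! i) (xs ! j)))"
  define Pe :: "complex mat" where "Pe = mat N N (\<lambda>(i, j). complex_of_real (arc_walk V E (ys ! i) (ys ! j)))"
  have vk: "vertex_kemeny V E = kemeny_mat Pv"
    unfolding vertex_kemeny_def kemeny_def Let_def xs_def[symmetric] Pv_def n_def ..
  have ek: "edge_kemeny V E = kemeny_mat Pe"
    unfolding edge_kemeny_def kemeny_def Let_def ys_def[symmetric] Pe_def N_def ..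
  have Hc: "Hm \<in> carrier_mat N n" unfolding Hm_def by simp
  have Kc: "Km \<in> carrier_mat n N" unfolding Km_def by simp
  have PeHK: "Pe = Hm * Km"
  proof (rule eq_matI)
    fix j j' assume j: "j < dim_row (Hm * Km)" and j': "j' < dim_col (Hm * Km)"
    hence jN: "j < N" and j'N: "j' < N" using Hc Kc by auto
    have aj: "ys ! j \<in> arcs V E" using jN ys unfolding N_def by (metis nth_mem)
    have aj': "ys ! j' \<in> arcs V E" using j'N ys unfolding N_def by (metis nth_mem)
    have sV: "snd (ys ! j) \<in> set xs" using aj xs unfolding arcs_def by auto
    have "(Hm * Km) $$ (j, j') = (\<Sum>i\<in>{0..<n}. Hm $$ (j, i) * Km $$ (i, j'))"
      using jN j'N Hc Kc by (simp add: scalar_prod_def)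
    also have "\<dots> = (\<Sum>i\<in>{0..<length xs}. (\<lambda>v. if snd (ys ! j) = v then
         (if fst (ys ! j') = v then c v else 0) else 0) (xs ! i))"
      unfolding n_def by (rule sum.cong[OF refl]) (use jN j'N in \<open>auto simp: Hm_def Km_def n_def\<close>)
    also have "\<dots> = (if fst (ys ! j') = snd (ys ! j) then c (snd (ys ! j)) else 0)"
      unfolding sum_nth_distinct[OF xs(1), of "\<lambda>v. if snd (ys ! j) = v then
         (if fst (ys ! j') = v then c v else 0) else 0"] using sV by (simp add: sum.delta)
    also have "\<dots> = Pe $$ (j, j')"
      using jN j'N aj' unfolding Pe_def arc_walk_def c_def arcs_def by auto
    finally show "Pe $$ (j, j') = (Hm * Km) $$ (j, j')" by simp
  qed (use Hc Kc in \<open>auto simp: Pe_def\<close>)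
  have PvKH: "Pv = Km * Hm"
  proof (rule eq_matI)
    fix i l assume i: "i < dim_row (Km * Hm)" and l: "l < dim_col (Km * Hm)"
    hence iN: "i < n" and lN: "l < n" using Hc Kc by auto
    have iV: "xs ! i \<in> V" "xs ! l \<in> V" using iN lN xs unfolding n_def by (metis nth_mem)+
    have "(Km * Hm) $$ (i, l) = (\<Sum>j\<in>{0..<N}. Km $$ (i, j) * Hm $$ (j, l))"
      using iN lN Hc Kc by (simp add: scalar_prod_def)
    also have "\<dots> = (\<Sum>j\<in>{0..<length ys}. (\<lambda>p. if p = (xs ! i, xs ! l) then c (xs ! i) else 0) (ys ! j))"
      unfolding N_def by (rule sum.cong[OF refl])
        (use iN lN in \<open>auto simp: Hm_def Km_def N_def prod_eq_iff\<close>)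
    also have "\<dots> = (if (xs ! i, xs ! l) \<in> arcs V E then c (xs ! i) else 0)"
      unfolding sum_nth_distinct[OF ys(1), of "\<lambda>p. if p = (xs ! i, xs ! l) then c (xs ! i) else 0"] ys(2)
      using finA by (simp add: sum.delta')
    also have "\<dots> = Pv $$ (i, l)"
      using iN lN iV unfolding Pv_def vertex_walk_def c_def arcs_def by auto
    finally show "Pv $$ (i, l) = (Km * Hm) $$ (i, l)" by simp
  qed (use Hc Kc in \<open>auto simp: Pv_def\<close>)
  have "[:0,1:] ^ n * char_poly Pe = [:0,1:] ^ N * char_poly Pv"
    unfolding PeHK PvKH by (rule cp_sylv[OF Hc Kc])
  hence "kemeny_mat Pe = kemeny_mat Pv + of_nat N - of_nat n"
    by (rule kemeny_shift[rotated 2]) (auto simp: Pe_def Pv_def)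
  thus ?thesis unfolding vk ek N n by simp
qed

end
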